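(* Let $(G,\preceq)$ be a cc sponge group with positive cone $C=\{x\in G\mid\mathbf{1}\preceq x\}$, and let $H$ be a subgroup of $G$ such that (i) for all $q,r\in G$, if $\mathbf{1}\preceq q$, $\mathbf{1}\preceq r$ and $q\cdot r\in H$, then $q\in H$ and $r\in H$; and (ii) for every $z\in G$ there is $h\in H$ with $R(z)\cap C\cdot H\subseteq R(h)$, where $R(z)=\{y\in G\mid z\preceq y\}$. Define the relation $\sqsubseteq$ on $G/H=\{x\cdot H\mid x\in G\}$ by $\overline{x}\sqsubseteq\overline{y}\iff x^{-1}\cdot y\in C\cdot H$ (where $\overline{x}=x\cdot H$). Then $(G/H,\sqsubseteq)$ is a cc sponge. If $H$ is a normal subgroup of $G$, then $(G/H,\sqsubseteq)$ is a cc sponge group.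
   Context: An orientation is a reflexive, antisymmetric binary relation. An oriented group is a group $G$ (operation $\cdot$, neutral element $\mathbf{1}$) with an orientation $\preceq$ such that $x\preceq y$ implies $x\cdot z\preceq y\cdot z$ and $z\cdot x\preceq z\cdot y$. A subset $P$ is right-bounded if some $s$ has $p\preceq s$ for all $p\in P$; the join of $P$ is an $x$ with $p\preceq x$ for all $p\in P$ and $x\preceq y$ whenever $p\preceq y$ for all $p\in P$. An oriented set is a cc sponge if every nonempty right-bounded subset has a join (equivalently for these structures, every nonempty left-bounded subset has a meet). A cc sponge group is an oriented group that is a cc sponge. *)

theory Defs
  imports "HOL-Algebra.Left_Coset"
begin

definition orientation :: "'a set \<Rightarrow> ('a \<Rightarrow> 'a \<Rightarrow> bool) \<Rightarrow> bool" where
  "orientation A rel \<longleftrightarrow> (\<forall>x\<in>A. rel x x) \<and> (\<forall>x\<in>A. \<forall>y\<in>A. rel x y \<and> rel y x \<longrightarrow> x = y)"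

definition oriented_group :: "('a, 'b) monoid_scheme \<Rightarrow> ('a \<Rightarrow> 'a \<Rightarrow> bool) \<Rightarrow> bool" where
  "oriented_group G rel \<longleftrightarrow> group G \<and> orientation (carrier G) rel \<and>
     (\<forall>x\<in>carrier G. \<forall>y\<in>carrier G. \<forall>z\<in>carrier G. rel x y \<longrightarrow>
        rel (x \<otimes>\<^bsub>G\<^esub> z) (y \<otimes>\<^bsub>G\<^esub> z) \<and> rel (z \<otimes>\<^bsub>G\<^esub> x) (z \<otimes>\<^bsub>G\<^esub> y))"

definition right_bounded :: "'a set \<Rightarrow> ('a \<Rightarrow> 'a \<Rightarrow> bool) \<Rightarrow> 'a set \<Rightarrow> bool" where
  "right_bounded A rel P \<longleftrightarrow> (\<exists>s\<in>A. \<forall>p\<in>P. rel p s)"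

definition is_join :: "'a set \<Rightarrow> ('a \<Rightarrow> 'a \<Rightarrow> bool) \<Rightarrow> 'a set \<Rightarrow> 'a \<Rightarrow> bool" where
  "is_join A rel P x \<longleftrightarrow> x \<in> A \<and> (\<forall>p\<in>P. rel p x) \<and>
     (\<forall>y\<in>A. (\<forall>p\<in>P. rel p y) \<longrightarrow> rel x y)"

definition cc_sponge :: "'a set \<Rightarrow> ('a \<Rightarrow> 'a \<Rightarrow> bool) \<Rightarrow> bool" where
  "cc_sponge A rel \<longleftrightarrow> orientation A rel \<and>
     (\<forall>P. P \<subseteq> A \<and> P \<noteq> {} \<and> right_bounded A rel P \<longrightarrow> (\<exists>x. is_join A rel P x))"

definition cc_sponge_group :: "('a, 'b) monoid_scheme \<Rightarrow> ('a \<Rightarrow> 'a \<Rightarrow> bool) \<Rightarrow> bool" where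
  "cc_sponge_group G rel \<longleftrightarrow> oriented_group G rel \<and> cc_sponge (carrier G) rel"

definition pos_cone :: "('a, 'b) monoid_scheme \<Rightarrow> ('a \<Rightarrow> 'a \<Rightarrow> bool) \<Rightarrow> 'a set" where
  "pos_cone G rel = {x \<in> carrier G. rel \<one>\<^bsub>G\<^esub> x}"

definition right_set :: "('a, 'b) monoid_scheme \<Rightarrow> ('a \<Rightarrow> 'a \<Rightarrow> bool) \<Rightarrow> 'a \<Rightarrow> 'a set" where
  "right_set G rel z = {y \<in> carrier G. rel z y}"

definition quot_rel :: "('a, 'b) monoid_scheme \<Rightarrow> ('a \<Rightarrow> 'a \<Rightarrow> bool) \<Rightarrow> 'a set \<Rightarrow> 'a set \<Rightarrow> 'a set \<Rightarrow> bool" where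
  "quot_rel G rel H X Y \<longleftrightarrow> (\<exists>x\<in>carrier G. \<exists>y\<in>carrier G.
      X = x <#\<^bsub>G\<^esub> H \<and> Y = y <#\<^bsub>G\<^esub> H \<and>
      inv\<^bsub>G\<^esub> x \<otimes>\<^bsub>G\<^esub> y \<in> pos_cone G rel <#>\<^bsub>G\<^esub> H)"

end

theory Submission
  imports Defs
begin

locale osg = group G for G (structure) +
  fixes rel :: "'a \<Rightarrow> 'a \<Rightarrow> bool" and H :: "'a set"
  assumes sub: "subgroup H G"
    and rrefl: "x \<in> carrier G \<Longrightarrow> rel x x"
    and ranti: "x \<in> carrier G \<Longrightarrow> y \<in> carrier G \<Longrightarrow> rel x y \<Longrightarrow> rel y x \<Longrightarrow> x = y"
    and mr: "x \<in> carrier G \<Longrightarrow> y \<in> carrier G \<Longrightarrow> z \<in> carrier G \<Longrightarrow> rel x y \<Longrightarrow> rel (x \<otimes> z) (y \<otimes> z)"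
    and ml: "x \<in> carrier G \<Longrightarrow> y \<in> carrier G \<Longrightarrow> z \<in> carrier G \<Longrightarrow> rel x y \<Longrightarrow> rel (z \<otimes> x) (z \<otimes> y)"
    and convex: "\<And>q r. q \<in> carrier G \<Longrightarrow> r \<in> carrier G \<Longrightarrow> rel \<one> q \<Longrightarrow> rel \<one> r \<Longrightarrow>
                   q \<otimes> r \<in> H \<Longrightarrow> q \<in> H \<and> r \<in> H"
    and bound: "\<And>z. z \<in> carrier G \<Longrightarrow>
                   \<exists>h\<in>H. right_set G rel z \<inter> (pos_cone G rel <#> H) \<subseteq> right_set G rel h"
begin

lemma c1[simp]: "x \<in> carrier G \<Longrightarrow> y \<in> carrier G \<Longrightarrow> x \<otimes> (inv x \<otimes> y) = y"
  by (simp add: m_assoc[symmetric])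
lemma c2[simp]: "x \<in> carrier G \<Longrightarrow> y \<in> carrier G \<Longrightarrow> inv x \<otimes> (x \<otimes> y) = y"
  by (simp add: m_assoc[symmetric])

lemma setmult_mem: "c \<in> A \<Longrightarrow> k \<in> B \<Longrightarrow> c \<otimes> k \<in> A <#> B"
  by (auto simp: set_mult_def)

lemma Hc: "h \<in> H \<Longrightarrow> h \<in> carrier G"
  by (rule subgroup.mem_carrier[OF sub])

lemma Hinv: "h \<in> H \<Longrightarrow> inv h \<in> H"
  by (rule subgroup.m_inv_closed[OF sub])

lemma Hmul: "h \<in> H \<Longrightarrow> k \<in> H \<Longrightarrow> h \<otimes> k \<in> H"
  by (rule subgroup.m_closed[OF sub])

lemma coset_elem: "y \<in> x <# H \<Longrightarrow> \<exists>h\<in>H. y = x \<otimes> h"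
  unfolding l_coset_def by blast

lemma conj_pos: assumes "c \<in> carrier G" "g \<in> carrier G" "rel \<one> c"
  shows "rel \<one> (inv g \<otimes> c \<otimes> g)"
proof -
  have a: "rel (inv g \<otimes> \<one>) (inv g \<otimes> c)" by (rule ml) (use assms in auto)
  have "rel (inv g \<otimes> \<one> \<otimes> g) (inv g \<otimes> c \<otimes> g)" by (rule mr) (use a assms in auto)
  then show ?thesis using assms by simp
qed

lemma L5: assumes "x \<in> carrier G" "y \<in> carrier G" "h \<in> H" "h1 \<in> H" "h2 \<in> H" "rel x (y \<otimes> h)"
  shows "\<exists>k\<in>H. rel (x \<otimes> h1) ((y \<otimes> h2) \<otimes> k)"
proof -
  have r: "rel (x \<otimes> h1) (y \<otimes> h \<otimes> h1)" by (rule mr) (use assms Hc in auto)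
  have e: "y \<otimes> h \<otimes> h1 = (y \<otimes> h2) \<otimes> (inv h2 \<otimes> h \<otimes> h1)"
    using assms Hc by (simp add: m_assoc)
  have k: "inv h2 \<otimes> h \<otimes> h1 \<in> H" using assms Hinv Hmul by simp
  have "rel (x \<otimes> h1) ((y \<otimes> h2) \<otimes> (inv h2 \<otimes> h \<otimes> h1))" using r unfolding e .
  then show ?thesis using k by (rule_tac bexI)
qed

lemma L4: assumes "x \<in> carrier G" "y \<in> carrier G"
  shows "inv x \<otimes> y \<in> pos_cone G rel <#> H \<longleftrightarrow> (\<exists>h\<in>H. rel x (y \<otimes> h))"
proof
  assume "inv x \<otimes> y \<in> pos_cone G rel <#> H"
  then obtain c h where c: "c \<in> carrier G" "rel \<one> c" and h: "h \<in> H" and e: "inv x \<otimes> y = c \<otimes> h"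
    unfolding set_mult_def pos_cone_def by auto
  have "rel (x \<otimes> \<one>) (x \<otimes> c)" by (rule ml) (use c assms in auto)
  moreover have "x \<otimes> c = y \<otimes> inv h"
  proof -
    have "y = x \<otimes> (c \<otimes> h)" using e assms c h Hc by (metis inv_solve_left m_closed)
    then show ?thesis using assms c h Hc by (simp add: m_assoc)
  qed
  ultimately show "\<exists>h\<in>H. rel x (y \<otimes> h)" using assms h Hinv by auto
next
  assume "\<exists>h\<in>H. rel x (y \<otimes> h)"
  then obtain h where h: "h \<in> H" "rel x (y \<otimes> h)" by blast
  have "rel (inv x \<otimes> x) (inv x \<otimes> (y \<otimes> h))" by (rule ml) (use h assms Hc in auto)
  then have r: "rel \<one> (inv x \<otimes> y \<otimes> h)" using assms h Hc by (simp add: m_assoc)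
  have e: "inv x \<otimes> y = (inv x \<otimes> y \<otimes> h) \<otimes> inv h" using assms h Hc by (simp add: m_assoc)
  have cp: "inv x \<otimes> y \<otimes> h \<in> pos_cone G rel" using r assms h Hc unfolding pos_cone_def by simp
  show "inv x \<otimes> y \<in> pos_cone G rel <#> H" by (subst e) (rule setmult_mem[OF cp Hinv[OF h(1)]])
qed

lemma qr_iff: assumes "x \<in> carrier G" "y \<in> carrier G"
  shows "quot_rel G rel H (x <# H) (y <# H) \<longleftrightarrow> (\<exists>h\<in>H. rel x (y \<otimes> h))"
proof
  assume "quot_rel G rel H (x <# H) (y <# H)"
  then obtain x' y' where c: "x' \<in> carrier G" "y' \<in> carrier G" "x <# H = x' <# H" "y <# H = y' <# H"
    and r: "inv x' \<otimes> y' \<in> pos_cone G rel <#> H" unfolding quot_rel_def by blast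
  obtain h where h: "h \<in> H" "rel x' (y' \<otimes> h)" using r L4 c by blast
  have "x \<in> x' <# H" using lcos_self[OF assms(1) sub] unfolding c(3) .
  then obtain h1 where h1: "h1 \<in> H" "x = x' \<otimes> h1" using coset_elem by blast
  have "y \<in> y' <# H" using lcos_self[OF assms(2) sub] unfolding c(4) .
  then obtain h2 where h2: "h2 \<in> H" "y = y' \<otimes> h2" using coset_elem by blast
  show "\<exists>h\<in>H. rel x (y \<otimes> h)" unfolding h1(2) h2(2) by (rule L5[OF c(1,2) h(1) h1(1) h2(1) h(2)])
next
  assume "\<exists>h\<in>H. rel x (y \<otimes> h)"
  then have "inv x \<otimes> y \<in> pos_cone G rel <#> H" using L4[OF assms] by simp
  then show "quot_rel G rel H (x <# H) (y <# H)" unfolding quot_rel_def using assms by blast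
qed

lemma antisym_le: assumes "x \<in> carrier G" "y \<in> carrier G" "h \<in> H" "h' \<in> H"
  "rel x (y \<otimes> h)" "rel y (x \<otimes> h')"
  shows "x <# H = y <# H"
proof -
  have hc: "h \<in> carrier G" "h' \<in> carrier G" using assms Hc by auto
  define q where "q = inv x \<otimes> y \<otimes> h"
  define r where "r = inv h \<otimes> (inv y \<otimes> x \<otimes> h') \<otimes> h"
  have qc: "q \<in> carrier G" "r \<in> carrier G" unfolding q_def r_def using assms hc by auto
  have "rel (inv x \<otimes> x) (inv x \<otimes> (y \<otimes> h))" by (rule ml) (use assms hc in auto)
  then have q1: "rel \<one> q" unfolding q_def using assms hc by (simp add: m_assoc)
  have "rel (inv y \<otimes> y) (inv y \<otimes> (x \<otimes> h'))" by (rule ml) (use assms hc in auto)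
  then have "rel \<one> (inv y \<otimes> x \<otimes> h')" using assms hc by (simp add: m_assoc)
  then have r1: "rel \<one> r" unfolding r_def using conj_pos assms hc by simp
  have "q \<otimes> r = h' \<otimes> h" unfolding q_def r_def using assms hc
    by (simp add: m_assoc inv_solve_left)
  then have "q \<otimes> r \<in> H" using assms Hmul by simp
  then have "q \<in> H" using convex qc q1 r1 by blast
  then have "q \<otimes> inv h \<in> H" using Hmul Hinv assms by simp
  moreover have "q \<otimes> inv h = inv x \<otimes> y" unfolding q_def using assms hc by (simp add: m_assoc)
  ultimately have "y \<in> x <# H" using sub subgroup.lcos_module_rev assms is_group by metis
  then show ?thesis using l_repr_independence assms sub by blast
qed


lemma in_coset: assumes "X \<in> lcosets H" "q \<in> X" shows "q \<in> carrier G" "X = q <# H"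
proof -
  obtain p where p: "p \<in> carrier G" "X = p <# H" using assms(1) unfolding LCOSETS_def by blast
  show "q \<in> carrier G" using l_coset_carrier[OF _ p(1) sub] assms(2) p(2) by blast
  show "X = q <# H" using l_repr_independence[OF _ p(1) sub] assms(2) p(2) by blast
qed

lemma lcos_in: "x \<in> carrier G \<Longrightarrow> x <# H \<in> lcosets H"
  unfolding LCOSETS_def by blast

lemma lcos_cases: assumes "X \<in> lcosets H" obtains x where "x \<in> carrier G" "X = x <# H"
  using assms unfolding LCOSETS_def by blast

lemma qrefl: "X \<in> lcosets H \<Longrightarrow> quot_rel G rel H X X"
proof -
  assume "X \<in> lcosets H"
  then obtain x where x: "x \<in> carrier G" "X = x <# H" by (rule lcos_cases)
  have "rel x (x \<otimes> \<one>)" using x rrefl by simp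
  then have "\<exists>h\<in>H. rel x (x \<otimes> h)" using subgroup.one_closed[OF sub] by blast
  then show ?thesis using qr_iff[OF x(1) x(1)] x(2) by simp
qed

lemma qanti: "X \<in> lcosets H \<Longrightarrow> Y \<in> lcosets H \<Longrightarrow> quot_rel G rel H X Y \<Longrightarrow> quot_rel G rel H Y X \<Longrightarrow> X = Y"
proof -
  assume a: "X \<in> lcosets H" "Y \<in> lcosets H" "quot_rel G rel H X Y" "quot_rel G rel H Y X"
  obtain x where x: "x \<in> carrier G" "X = x <# H" using a(1) by (rule lcos_cases)
  obtain y where y: "y \<in> carrier G" "Y = y <# H" using a(2) by (rule lcos_cases)
  obtain h where h: "h \<in> H" "rel x (y \<otimes> h)" using a(3) qr_iff[OF x(1) y(1)] x y by auto
  obtain h' where h': "h' \<in> H" "rel y (x \<otimes> h')" using a(4) qr_iff[OF y(1) x(1)] x y by auto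
  show ?thesis using antisym_le[OF x(1) y(1) h(1) h'(1) h(2) h'(2)] x y by simp
qed

lemma join_ex:
  assumes P: "P \<subseteq> lcosets H" "P \<noteq> {}" "right_bounded (lcosets H) (quot_rel G rel H) P"
    and sp: "\<forall>Q. Q \<subseteq> carrier G \<and> Q \<noteq> {} \<and> right_bounded (carrier G) rel Q \<longrightarrow> (\<exists>x. is_join (carrier G) rel Q x)"
  shows "\<exists>X. is_join (lcosets H) (quot_rel G rel H) P X"
proof -
  obtain S where S: "S \<in> lcosets H" "\<forall>X\<in>P. quot_rel G rel H X S"
    using P(3) unfolding right_bounded_def by blast
  obtain s where s: "s \<in> carrier G" "S = s <# H" using S(1) by (rule lcos_cases)
  define Q where "Q = {q \<in> carrier G. rel q s \<and> (\<exists>X\<in>P. q \<in> X)}"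
  have rep: "\<exists>q\<in>X. rel q s" if X: "X \<in> P" for X
  proof -
    obtain p where p: "p \<in> carrier G" "X = p <# H" using P(1) X by (meson lcos_cases subsetD)
    obtain h where h: "h \<in> H" "rel p (s \<otimes> h)" using S(2) X qr_iff[OF p(1) s(1)] p s by auto
    have hc: "h \<in> carrier G" using Hc h by simp
    have "rel (p \<otimes> inv h) (s \<otimes> h \<otimes> inv h)" by (rule mr) (use p s h hc in auto)
    then have "rel (p \<otimes> inv h) s" using s hc by (simp add: m_assoc)
    moreover have "p \<otimes> inv h \<in> X" using p Hinv[OF h(1)] unfolding l_coset_def by blast
    ultimately show ?thesis by blast
  qed
  have Qsub: "Q \<subseteq> carrier G" unfolding Q_def by blast
  have Qne: "Q \<noteq> {}"
  proof -
    obtain X where X: "X \<in> P" using P(2) by blast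
    obtain q where q: "q \<in> X" "rel q s" using rep[OF X] by blast
    have "q \<in> carrier G" using in_coset(1)[OF _ q(1)] P(1) X by blast
    then have "q \<in> Q" unfolding Q_def using q X by blast
    then show ?thesis by blast
  qed
  have Qrb: "right_bounded (carrier G) rel Q" unfolding right_bounded_def Q_def using s by blast
  obtain j where j: "is_join (carrier G) rel Q j" using sp Qsub Qne Qrb by blast
  have jc: "j \<in> carrier G" and jub: "\<forall>q\<in>Q. rel q j"
    and jl: "\<forall>y\<in>carrier G. (\<forall>q\<in>Q. rel q y) \<longrightarrow> rel j y"
    using j unfolding is_join_def by auto
  have "is_join (lcosets H) (quot_rel G rel H) P (j <# H)"
    unfolding is_join_def
  proof (intro conjI ballI impI)
    show "j <# H \<in> lcosets H" using jc by (rule lcos_in)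
  next
    fix X assume X: "X \<in> P"
    obtain q where q: "q \<in> X" "rel q s" using rep[OF X] by blast
    have qc: "q \<in> carrier G" and Xq: "X = q <# H" using in_coset[OF _ q(1)] P(1) X by blast+
    have "q \<in> Q" unfolding Q_def using q X qc by blast
    then have "rel q (j \<otimes> \<one>)" using jub jc by simp
    then have "\<exists>h\<in>H. rel q (j \<otimes> h)" using subgroup.one_closed[OF sub] by blast
    then show "quot_rel G rel H X (j <# H)" using qr_iff[OF qc jc] Xq by simp
  next
    fix Y assume Y: "Y \<in> lcosets H" and ub: "\<forall>X\<in>P. quot_rel G rel H X Y"
    obtain t where t: "t \<in> carrier G" "Y = t <# H" using Y by (rule lcos_cases)
    have zc: "inv s \<otimes> t \<in> carrier G" using s t by simp
    obtain h' where h': "h' \<in> H"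
      "right_set G rel (inv s \<otimes> t) \<inter> (pos_cone G rel <#> H) \<subseteq> right_set G rel h'"
      using bound[OF zc] by blast
    have h'c: "h' \<in> carrier G" using Hc h' by simp
    have "rel q (t \<otimes> inv h')" if qQ: "q \<in> Q" for q
    proof -
      obtain X where X: "X \<in> P" "q \<in> X" and qs: "rel q s" and qc: "q \<in> carrier G"
        using qQ unfolding Q_def by blast
      have Xq: "X = q <# H" using in_coset(2)[OF _ X(2)] P(1) X(1) by blast
      have "quot_rel G rel H (q <# H) (t <# H)" using ub X(1) Xq t by simp
      then have "\<exists>h\<in>H. rel q (t \<otimes> h)" using qr_iff[OF qc t(1)] by simp
      then have inCH: "inv q \<otimes> t \<in> pos_cone G rel <#> H" using L4[OF qc t(1)] by simp
      have a1: "rel (inv q \<otimes> q) (inv q \<otimes> s)" by (rule ml) (use qc s qs in auto)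
      then have a1': "rel \<one> (inv q \<otimes> s)" using qc by simp
      have a2: "rel (\<one> \<otimes> inv s) (inv q \<otimes> s \<otimes> inv s)" by (rule mr) (use qc s a1' in auto)
      then have a2': "rel (inv s) (inv q)" using qc s by (simp add: m_assoc)
      have a3: "rel (inv s \<otimes> t) (inv q \<otimes> t)" by (rule mr) (use qc s t a2' in auto)
      have "inv q \<otimes> t \<in> right_set G rel (inv s \<otimes> t)" unfolding right_set_def using a3 qc t by simp
      then have "inv q \<otimes> t \<in> right_set G rel h'" using h'(2) inCH by blast
      then have b: "rel h' (inv q \<otimes> t)" unfolding right_set_def by simp
      have "rel (q \<otimes> h') (q \<otimes> (inv q \<otimes> t))" by (rule ml) (use qc t h'c b in auto)
      then have b1: "rel (q \<otimes> h') t" using qc t by simp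
      have "rel (q \<otimes> h' \<otimes> inv h') (t \<otimes> inv h')" by (rule mr) (use qc t h'c b1 in auto)
      then show ?thesis using qc h'c by (simp add: m_assoc)
    qed
    then have "rel j (t \<otimes> inv h')" using jl t h'c by simp
    then have "\<exists>h\<in>H. rel j (t \<otimes> h)" using Hinv[OF h'(1)] by blast
    then show "quot_rel G rel H (j <# H) Y" using qr_iff[OF jc t(1)] t by simp
  qed
  then show ?thesis by blast
qed

lemma main_osg:
  assumes sp: "\<forall>Q. Q \<subseteq> carrier G \<and> Q \<noteq> {} \<and> right_bounded (carrier G) rel Q \<longrightarrow> (\<exists>x. is_join (carrier G) rel Q x)"
  shows "cc_sponge (lcosets H) (quot_rel G rel H) \<and> (H \<lhd> G \<longrightarrow> cc_sponge_group (G LMod H) (quot_rel G rel H))"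
proof -
  have ccs: "cc_sponge (lcosets H) (quot_rel G rel H)"
    unfolding cc_sponge_def orientation_def
    using qrefl qanti join_ex sp by blast
  moreover have "cc_sponge_group (G LMod H) (quot_rel G rel H)" if nH: "H \<lhd> G"
  proof -
    interpret N: normal H G by (rule nH)
    have lr: "lcosets H = rcosets H"
      unfolding LCOSETS_def RCOSETS_def using N.coset_eq by auto
    have eqG: "G LMod H = G Mod H"
      unfolding LFactGroup_def FactGroup_def lr ..
    have gq: "group (G LMod H)" unfolding eqG by (rule N.factorgroup_is_group)
    have cm: "X <#> Z = (x \<otimes> z) <# H" if "x \<in> carrier G" "z \<in> carrier G" "X = x <# H" "Z = z <# H" for X Z x z
      using N.rcos_sum[of x z] that N.coset_eq by simp
    have compq: "quot_rel G rel H (X <#> Z) (Y <#> Z) \<and> quot_rel G rel H (Z <#> X) (Z <#> Y)"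
      if XYZ: "X \<in> lcosets H" "Y \<in> lcosets H" "Z \<in> lcosets H" and r: "quot_rel G rel H X Y" for X Y Z
    proof -
      obtain x where x: "x \<in> carrier G" "X = x <# H" using XYZ(1) by (rule lcos_cases)
      obtain y where y: "y \<in> carrier G" "Y = y <# H" using XYZ(2) by (rule lcos_cases)
      obtain z where z: "z \<in> carrier G" "Z = z <# H" using XYZ(3) by (rule lcos_cases)
      obtain h where h: "h \<in> H" "rel x (y \<otimes> h)" using r qr_iff[OF x(1) y(1)] x y by auto
      have hc: "h \<in> carrier G" using Hc h by simp
      have "rel (x \<otimes> z) (y \<otimes> h \<otimes> z)" by (rule mr) (use x y z h hc in auto)
      moreover have "y \<otimes> h \<otimes> z = (y \<otimes> z) \<otimes> (inv z \<otimes> h \<otimes> z)" using y z hc by (simp add: m_assoc)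
      moreover have "inv z \<otimes> h \<otimes> z \<in> H" using N.inv_op_closed1 z h by simp
      ultimately have "\<exists>k\<in>H. rel (x \<otimes> z) ((y \<otimes> z) \<otimes> k)" by auto
      then have 1: "quot_rel G rel H (X <#> Z) (Y <#> Z)"
        using qr_iff[of "x \<otimes> z" "y \<otimes> z"] cm[OF x(1) z(1) x(2) z(2)] cm[OF y(1) z(1) y(2) z(2)] x y z by simp
      have "rel (z \<otimes> x) (z \<otimes> (y \<otimes> h))" by (rule ml) (use x y z h hc in auto)
      then have "rel (z \<otimes> x) ((z \<otimes> y) \<otimes> h)" using y z hc by (simp add: m_assoc)
      then have "\<exists>k\<in>H. rel (z \<otimes> x) ((z \<otimes> y) \<otimes> k)" using h by blast
      then have 2: "quot_rel G rel H (Z <#> X) (Z <#> Y)"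
        using qr_iff[of "z \<otimes> x" "z \<otimes> y"] cm[OF z(1) x(1) z(2) x(2)] cm[OF z(1) y(1) z(2) y(2)] x y z by simp
      show ?thesis using 1 2 by blast
    qed
    have "oriented_group (G LMod H) (quot_rel G rel H)"
      unfolding oriented_group_def orientation_def
      using gq qrefl qanti compq by (simp add: LFactGroup_def)
    moreover have "cc_sponge (carrier (G LMod H)) (quot_rel G rel H)"
      using ccs by (simp add: LFactGroup_def)
    ultimately show ?thesis unfolding cc_sponge_group_def by blast
  qed
  ultimately show ?thesis by blast
qed

end

theorem mainTheorem12:
  fixes G :: "('a, 'b) monoid_scheme" and rel :: "'a \<Rightarrow> 'a \<Rightarrow> bool" and H :: "'a set"
  assumes sponge: "cc_sponge_group G rel"
    and sub: "subgroup H G"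
    and convex: "\<And>q r. q \<in> carrier G \<Longrightarrow> r \<in> carrier G \<Longrightarrow> rel \<one>\<^bsub>G\<^esub> q \<Longrightarrow> rel \<one>\<^bsub>G\<^esub> r \<Longrightarrow>
                   q \<otimes>\<^bsub>G\<^esub> r \<in> H \<Longrightarrow> q \<in> H \<and> r \<in> H"
    and bound: "\<And>z. z \<in> carrier G \<Longrightarrow>
                   \<exists>h\<in>H. right_set G rel z \<inter> (pos_cone G rel <#>\<^bsub>G\<^esub> H) \<subseteq> right_set G rel h"
  shows "cc_sponge (lcosets\<^bsub>G\<^esub> H) (quot_rel G rel H)
         \<and> (H \<lhd> G \<longrightarrow> cc_sponge_group (G LMod H) (quot_rel G rel H))"
proof -
  have og: "oriented_group G rel" and sp0: "cc_sponge (carrier G) rel"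
    using sponge unfolding cc_sponge_group_def by auto
  have grp: "group G" and ori: "orientation (carrier G) rel"
    and comp: "\<forall>x\<in>carrier G. \<forall>y\<in>carrier G. \<forall>z\<in>carrier G. rel x y \<longrightarrow>
        rel (x \<otimes>\<^bsub>G\<^esub> z) (y \<otimes>\<^bsub>G\<^esub> z) \<and> rel (z \<otimes>\<^bsub>G\<^esub> x) (z \<otimes>\<^bsub>G\<^esub> y)"
    using og unfolding oriented_group_def by auto
  have sp: "\<forall>Q. Q \<subseteq> carrier G \<and> Q \<noteq> {} \<and> right_bounded (carrier G) rel Q \<longrightarrow> (\<exists>x. is_join (carrier G) rel Q x)"
    using sp0 unfolding cc_sponge_def by blast
  have "osg G rel H" unfolding osg_def osg_axioms_def
    using grp sub ori comp convex bound by (simp add: orientation_def)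
  show ?thesis using osg.main_osg[OF \<open>osg G rel H\<close> sp] by simp
qed

end
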